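(* There exist a binary matrix $A$ and two binary column vectors $x,y$ such that $R_{binary}(A|x)=R_{binary}(A|y)=R_{binary}(A)$, but $R_{binary}(A|x,y)>R_{binary}(A)$.
   Context: For a binary $n\times m$ matrix $A$, $R_{binary}(A)$ is the least $k$ such that $A=UV$ with $U\in\{0,1\}^{n\times k}$, $V\in\{0,1\}^{k\times m}$, ordinary arithmetic. $(A|x_1,\dots,x_t)$ denotes $A$ with columns $x_1,\dots,x_t$ appended on the right. *)

theory Defs
  imports Main
begin

text \<open>An n x m matrix is represented as a function nat => nat => nat; only entries
  with row index < n and column index < m are relevant. A column vector of length n
  is a function nat => nat, only indices < n relevant.\<close>

definition binary_mat :: "nat \<Rightarrow> nat \<Rightarrow> (nat \<Rightarrow> nat \<Rightarrow> nat) \<Rightarrow> bool" where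
  "binary_mat n m A \<longleftrightarrow> (\<forall>i<n. \<forall>j<m. A i j \<in> {0, 1})"

definition binary_vec :: "nat \<Rightarrow> (nat \<Rightarrow> nat) \<Rightarrow> bool" where
  "binary_vec n x \<longleftrightarrow> (\<forall>i<n. x i \<in> {0, 1})"

text \<open>A = U V with U binary n x k, V binary k x m, ordinary (integer) arithmetic.\<close>
definition binary_factorizable :: "nat \<Rightarrow> nat \<Rightarrow> (nat \<Rightarrow> nat \<Rightarrow> nat) \<Rightarrow> nat \<Rightarrow> bool" where
  "binary_factorizable n m A k \<longleftrightarrow>
     (\<exists>U V. binary_mat n k U \<and> binary_mat k m V \<and>
        (\<forall>i<n. \<forall>j<m. A i j = (\<Sum>l<k. U i l * V l j)))"

definition R_binary :: "nat \<Rightarrow> nat \<Rightarrow> (nat \<Rightarrow> nat \<Rightarrow> nat) \<Rightarrow> nat" where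
  "R_binary n m A = (LEAST k. binary_factorizable n m A k)"

definition append_col :: "nat \<Rightarrow> (nat \<Rightarrow> nat \<Rightarrow> nat) \<Rightarrow> (nat \<Rightarrow> nat) \<Rightarrow> (nat \<Rightarrow> nat \<Rightarrow> nat)" where
  "append_col m A x = (\<lambda>i j. if j = m then x i else A i j)"

end

theory Submission
  imports Defs
begin

lemma fool_bound:
  assumes fac: "binary_factorizable n m M k"
    and fin: "finite F"
    and inF: "\<And>p. p \<in> F \<Longrightarrow> fst p < n \<and> snd p < m \<and> M (fst p) (snd p) = 1"
    and fool: "\<And>p q. p \<in> F \<Longrightarrow> q \<in> F \<Longrightarrow> p \<noteq> q \<Longrightarrow>
                 M (fst p) (snd q) = 0 \<or> M (fst q) (snd p) = 0"
  shows "card F \<le> k"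
proof -
  obtain U V where bU: "binary_mat n k U" and bV: "binary_mat k m V"
    and eq: "\<forall>i<n. \<forall>j<m. M i j = (\<Sum>l<k. U i l * V l j)"
    using fac unfolding binary_factorizable_def by blast
  have ex: "\<exists>l<k. U (fst p) l = 1 \<and> V l (snd p) = 1" if "p \<in> F" for p
  proof -
    from inF[OF that] eq have s: "(\<Sum>l<k. U (fst p) l * V l (snd p)) = 1" by auto
    then obtain l where l: "l < k" "U (fst p) l * V l (snd p) \<noteq> 0"
      by (metis (no_types, lifting) lessThan_iff sum.neutral zero_neq_one)
    have "U (fst p) l \<in> {0,1}" "V l (snd p) \<in> {0,1}"
      using bU bV inF[OF that] l(1) unfolding binary_mat_def by auto
    with l show ?thesis by auto
  qed
  define f where "f p = (SOME l. l < k \<and> U (fst p) l = 1 \<and> V l (snd p) = 1)" for p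
  have fp: "f p < k \<and> U (fst p) (f p) = 1 \<and> V (f p) (snd p) = 1" if "p \<in> F" for p
    using someI_ex[OF ex[OF that]] unfolding f_def by blast
  have ge: "M i j \<ge> 1" if "i < n" "j < m" "l < k" "U i l = 1" "V l j = 1" for i j l
  proof -
    have "M i j = (\<Sum>l<k. U i l * V l j)" using eq that by auto
    also have "\<dots> \<ge> U i l * V l j"
      by (rule member_le_sum) (use that in auto)
    finally show ?thesis using that by simp
  qed
  have "inj_on f F"
  proof (rule inj_onI, rule ccontr)
    fix p q assume p: "p \<in> F" and q: "q \<in> F" and e: "f p = f q" and ne: "p \<noteq> q"
    have "M (fst p) (snd q) \<ge> 1"
      using ge[of "fst p" "snd q" "f p"] fp[OF p] fp[OF q] inF[OF p] inF[OF q] e by auto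
    moreover have "M (fst q) (snd p) \<ge> 1"
      using ge[of "fst q" "snd p" "f p"] fp[OF p] fp[OF q] inF[OF p] inF[OF q] e by auto
    ultimately show False using fool[OF p q ne] by auto
  qed
  moreover have "f ` F \<subseteq> {..<k}" using fp by auto
  ultimately show ?thesis
    by (metis card_image card_lessThan card_mono finite_lessThan)
qed

lemma R_eq:
  assumes "binary_factorizable n m M k" "\<And>k'. binary_factorizable n m M k' \<Longrightarrow> k \<le> k'"
  shows "R_binary n m M = k"
  unfolding R_binary_def using assms by (intro Least_equality) auto

lemma lt4: "(i::nat) < 4 \<longleftrightarrow> i = 0 \<or> i = 1 \<or> i = 2 \<or> i = 3" by auto
lemma lt3: "(i::nat) < 3 \<longleftrightarrow> i = 0 \<or> i = 1 \<or> i = 2" by auto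
lemma lt5: "(i::nat) < 5 \<longleftrightarrow> i = 0 \<or> i = 1 \<or> i = 2 \<or> i = 3 \<or> i = 4" by auto

definition "AA = (\<lambda>i j. [[0,0,1],[0,1,1],[1,0,1],[1,1,1::nat]] ! i ! j)"
definition "xx = (\<lambda>i. [1,0,1,0::nat] ! i)"
definition "yy = (\<lambda>i. [1,1,0,0::nat] ! i)"

lemma facA: "binary_factorizable 4 3 AA 3"
  unfolding binary_factorizable_def
  apply (rule exI[of _ "\<lambda>i j. [[1,0,0],[1,1,0],[0,0,1],[0,1,1::nat]] ! i ! j"])
  apply (rule exI[of _ "\<lambda>i j. [[0,0,1],[0,1,0],[1,0,1::nat]] ! i ! j"])
  by (simp add: binary_mat_def lt4 lt3 AA_def lt4 lt3 lt5 numeral_eq_Suc less_Suc_eq)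

lemma facAx: "binary_factorizable 4 4 (append_col 3 AA xx) 3"
  unfolding binary_factorizable_def
  apply (rule exI[of _ "\<lambda>i j. [[1,0,0],[0,1,0],[1,0,1],[0,1,1::nat]] ! i ! j"])
  apply (rule exI[of _ "\<lambda>i j. [[0,0,1,1],[0,1,1,0],[1,0,0,0::nat]] ! i ! j"])
  by (simp add: binary_mat_def lt4 lt3 AA_def xx_def append_col_def lt4 lt3 lt5 numeral_eq_Suc less_Suc_eq)

lemma facAy: "binary_factorizable 4 4 (append_col 3 AA yy) 3"
  unfolding binary_factorizable_def
  apply (rule exI[of _ "\<lambda>i j. [[1,0,0],[1,1,0],[0,0,1],[0,1,1::nat]] ! i ! j"])
  apply (rule exI[of _ "\<lambda>i j. [[0,0,1,1],[0,1,0,0],[1,0,1,0::nat]] ! i ! j"])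
  by (simp add: binary_mat_def lt4 lt3 AA_def yy_def append_col_def lt4 lt3 lt5 numeral_eq_Suc less_Suc_eq)

lemma lbA: "binary_factorizable 4 m M k \<Longrightarrow> m \<ge> 3 \<Longrightarrow> (\<And>i j. j < 3 \<Longrightarrow> M i j = AA i j) \<Longrightarrow> 3 \<le> k"
proof -
  assume f: "binary_factorizable 4 m M k" and m: "m \<ge> 3" and e: "\<And>i j. j < 3 \<Longrightarrow> M i j = AA i j"
  have "card {(0::nat,2::nat),(1,1),(2,0)} \<le> k"
  proof (rule fool_bound[OF f])
    fix p assume "p \<in> {(0::nat,2::nat),(1,1),(2,0)}"
    then show "fst p < 4 \<and> snd p < m \<and> M (fst p) (snd p) = 1" using m e by (auto simp: AA_def)
  next
    fix p q assume "p \<in> {(0::nat,2::nat),(1,1),(2,0)}" "q \<in> {(0::nat,2::nat),(1,1),(2,0)}" "p \<noteq> q"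
    then show "M (fst p) (snd q) = 0 \<or> M (fst q) (snd p) = 0" using e by (auto simp: AA_def)
  qed simp
  then show ?thesis by simp
qed

lemma lbB: "binary_factorizable 4 5 (append_col 4 (append_col 3 AA xx) yy) k \<Longrightarrow> 4 \<le> k"
proof -
  assume f: "binary_factorizable 4 5 (append_col 4 (append_col 3 AA xx) yy) k"
  have "card {(0::nat,3::nat),(1,4),(2,0),(3,1)} \<le> k"
  proof (rule fool_bound[OF f])
    fix p assume "p \<in> {(0::nat,3::nat),(1,4),(2,0),(3,1)}"
    then show "fst p < 4 \<and> snd p < 5 \<and> append_col 4 (append_col 3 AA xx) yy (fst p) (snd p) = 1"
      by (auto simp: AA_def xx_def yy_def append_col_def)
  next
    fix p q assume "p \<in> {(0::nat,3::nat),(1,4),(2,0),(3,1)}" "q \<in> {(0::nat,3::nat),(1,4),(2,0),(3,1)}" "p \<noteq> q"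
    then show "append_col 4 (append_col 3 AA xx) yy (fst p) (snd q) = 0 \<or> append_col 4 (append_col 3 AA xx) yy (fst q) (snd p) = 0"
      by (auto simp: AA_def xx_def yy_def append_col_def)
  qed simp
  then show ?thesis by simp
qed

theorem mainTheorem7:
  shows "\<exists>n m A x y.
     binary_mat n m A \<and> binary_vec n x \<and> binary_vec n y \<and>
     R_binary n (m + 1) (append_col m A x) = R_binary n m A \<and>
     R_binary n (m + 1) (append_col m A y) = R_binary n m A \<and>
     R_binary n (m + 2) (append_col (m + 1) (append_col m A x) y) > R_binary n m A"
proof -
  have rA: "R_binary 4 3 AA = 3"
    by (rule R_eq[OF facA]) (erule lbA, auto)
  have rAx: "R_binary 4 4 (append_col 3 AA xx) = 3"
    by (rule R_eq[OF facAx]) (erule lbA, auto simp: append_col_def)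
  have rAy: "R_binary 4 4 (append_col 3 AA yy) = 3"
    by (rule R_eq[OF facAy]) (erule lbA, auto simp: append_col_def)
  have rB: "R_binary 4 5 (append_col 4 (append_col 3 AA xx) yy) > 3"
  proof -
    have "binary_factorizable 4 5 (append_col 4 (append_col 3 AA xx) yy) (LEAST k. binary_factorizable 4 5 (append_col 4 (append_col 3 AA xx) yy) k)"
      proof (rule LeastI[of _ 4])
      let ?B = "append_col 4 (append_col 3 AA xx) yy"
      show "binary_factorizable 4 5 ?B 4"
        unfolding binary_factorizable_def
        apply (rule exI[of _ "\<lambda>i l. if i = l then 1 else 0"])
        apply (rule exI[of _ ?B])
        by (simp add: binary_mat_def lt4 lt5 AA_def xx_def yy_def append_col_def numeral_eq_Suc less_Suc_eq)
    qed
    then show ?thesis unfolding R_binary_def using lbB by fastforce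
  qed
  have "binary_mat 4 3 AA" by (simp add: binary_mat_def lt4 lt3 AA_def)
  moreover have "binary_vec 4 xx" "binary_vec 4 yy" by (simp_all add: binary_vec_def lt4 xx_def yy_def)
  ultimately show ?thesis
    using rA rAx rAy rB by (intro exI[of _ 4] exI[of _ 3] exI[of _ AA] exI[of _ xx] exI[of _ yy]) simp
qed

end
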